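(* Let $m\ge2$, $0<h<2^m$ and $k\in\mathbb{Z}_0^m$. Then: the support $\mathrm{supp}\,\tau_k$ is a strictly convex compact $(m-1)$-dimensional body in $\mathbb{H}$; $\tau_k$ is nonnegative and strictly concave on $\mathrm{supp}\,\tau_k$; and $\tau_k$ is continuous on $\mathbb{H}$.
   Context: $s(t)=2\sin(t/2)$; $\mathbb{V}(h)=\{x\in\mathbb{R}^m:|\prod_{j=1}^m s(x_j)|\ge h\}$; $\mathbb{V}_0(h)=\mathbb{V}(h)\cap[0,2\pi]^m$; $\mathbb{V}_k(h)=\mathbb{V}_0(h)+2\pi k$ for $k\in\mathbb{Z}^m$. $\mathbb{Z}_0^m=\{0\}\times\mathbb{Z}^{m-1}$. $\mathcal{E}=(1,\dots,1)$, $\ell(x)=\{x+t\mathcal{E}:t\in\mathbb{R}\}$, and $\mathbb{H}=\{x\in\mathbb{R}^m:\sum_j x_j=0\}$. For $x\in\mathbb{H}$, $\tau_k(x)=\mathrm{mes}_1(\ell(x)\cap\mathbb{V}_k(h))$ (length of the intersection). $\mathrm{supp}\,\tau_k=\{x\in\mathbb{H}:\ell(x)\cap\mathbb{V}_k(h)\ne\emptyset\}$, the orthogonal projection of $\mathbb{V}_k(h)$ onto $\mathbb{H}$. *)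

theory Defs
  imports "HOL-Analysis.Analysis"
begin

text \<open>Points of R^m are vectors real^'n with m = CARD('n). The index type carries a
  well-order so that it has a distinguished first coordinate (used for Z_0^m).\<close>

definition sfun :: "real \<Rightarrow> real" where
  "sfun t = 2 * sin (t / 2)"

definition VV :: "real \<Rightarrow> (real ^ 'n) set" where
  "VV h = {x. \<bar>\<Prod>j\<in>UNIV. sfun (x $ j)\<bar> \<ge> h}"

definition VV0 :: "real \<Rightarrow> (real ^ 'n) set" where
  "VV0 h = VV h \<inter> {x. \<forall>j. 0 \<le> x $ j \<and> x $ j \<le> 2 * pi}"

definition VVk :: "real \<Rightarrow> int ^ 'n \<Rightarrow> (real ^ 'n) set" where
  "VVk h k = (\<lambda>x. x + (\<chi> j. 2 * pi * of_int (k $ j))) ` VV0 h"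

definition first_idx :: "'n::wellorder" where
  "first_idx = (LEAST i. True)"

definition Z0 :: "(int ^ 'n::{finite,wellorder}) set" where
  "Z0 = {k. k $ first_idx = 0}"

definition EE :: "real ^ 'n" where
  "EE = (\<chi> j. 1)"

definition HH :: "(real ^ 'n) set" where
  "HH = {x. (\<Sum>j\<in>UNIV. x $ j) = 0}"

text \<open>tau_k(x) = length (1-dim Lebesgue measure) of the intersection of the line
  through x in direction E with V_k(h); the line is parametrised by t with speed norm E.\<close>
definition tau :: "real \<Rightarrow> int ^ 'n \<Rightarrow> real ^ 'n \<Rightarrow> real" where
  "tau h k x = norm (EE :: real ^ 'n) * measure lborel {t::real. x + t *\<^sub>R EE \<in> VVk h k}"

definition supp_tau :: "real \<Rightarrow> int ^ 'n \<Rightarrow> (real ^ 'n) set" where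
  "supp_tau h k = {x \<in> HH. \<exists>t::real. x + t *\<^sub>R EE \<in> VVk h k}"

definition strictly_convex_set :: "'a::euclidean_space set \<Rightarrow> bool" where
  "strictly_convex_set S \<longleftrightarrow> convex S \<and>
     (\<forall>x\<in>S. \<forall>y\<in>S. x \<noteq> y \<longrightarrow> open_segment x y \<subseteq> rel_interior S)"

definition strictly_concave_on :: "'a::real_vector set \<Rightarrow> ('a \<Rightarrow> real) \<Rightarrow> bool" where
  "strictly_concave_on S f \<longleftrightarrow> convex S \<and>
     (\<forall>x\<in>S. \<forall>y\<in>S. \<forall>u::real. x \<noteq> y \<and> 0 < u \<and> u < 1 \<longrightarrow>
        f ((1 - u) *\<^sub>R x + u *\<^sub>R y) > (1 - u) * f x + u * f y)"

end

theory Submission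
  imports Defs
begin


definition SC :: "(real^'n) set \<Rightarrow> bool" where
  "SC K \<longleftrightarrow> (\<forall>p\<in>K. \<forall>q\<in>K. p \<noteq> q \<longrightarrow> open_segment p q \<subseteq> interior K)"

definition Fb :: "(real^'n) set \<Rightarrow> real^'n \<Rightarrow> real set" where
  "Fb K x = {t. x + t *\<^sub>R EE \<in> K}"

definition PP :: "real^'n \<Rightarrow> real^'n" where
  "PP y = y - ((\<Sum>j\<in>UNIV. y$j) / real CARD('n)) *\<^sub>R EE"

lemma EE_nth[simp]: "(EE :: real^'n) $ j = 1"
  by (simp add: EE_def)

lemma EE_nz: "(EE :: real^'n) \<noteq> 0"
  by (metis EE_nth vec_eq_iff zero_index zero_neq_one)

lemma norm_EE_pos: "norm (EE :: real^'n) > 0"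
  using EE_nz by simp

lemma sum_add_EE: "(\<Sum>j\<in>UNIV. (x + t *\<^sub>R (EE::real^'n)) $ j) = (\<Sum>j\<in>UNIV. x $ j) + t * real CARD('n)"
  by (simp add: sum.distrib)

lemma card_pos: "real CARD('n::finite) > 0"
  by simp

lemma HH_iff: "x \<in> HH \<longleftrightarrow> (\<Sum>j\<in>UNIV. x $ j) = 0"
  by (simp add: HH_def)

lemma HH_hyperplane: "(HH :: (real^'n) set) = {x. EE \<bullet> x = 0}"
  by (simp add: HH_def inner_vec_def)

lemma PP_HH: "PP (y::real^'n) \<in> HH"
proof -
  have "(\<Sum>j\<in>UNIV. (PP y) $ j) = (\<Sum>j\<in>UNIV. y $ j) - (\<Sum>j\<in>UNIV. y$j) / real CARD('n) * real CARD('n)"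
    by (simp add: PP_def sum_subtractf)
  also have "\<dots> = 0" using card_pos[where 'n='n] by simp
  finally show ?thesis by (simp add: HH_iff)
qed

lemma PP_line: "x \<in> HH \<Longrightarrow> PP (x + t *\<^sub>R EE) = x"
  unfolding PP_def using sum_add_EE[of x t] by (simp add: HH_iff algebra_simps)

lemma PP_decomp: "(y::real^'n) = PP y + ((\<Sum>j\<in>UNIV. y$j) / real CARD('n)) *\<^sub>R EE"
  by (simp add: PP_def)

lemma linear_PP: "linear (PP :: real^'n \<Rightarrow> real^'n)"
  by (rule linearI) (auto simp: PP_def sum.distrib sum_distrib_left add_divide_distrib scaleR_add_left vec_eq_iff algebra_simps)


lemma supp_eq: "{x \<in> HH. \<exists>t. x + t *\<^sub>R EE \<in> K} = PP ` (K :: (real^'n) set)"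
proof (intro set_eqI iffI)
  fix x assume "x \<in> {x \<in> HH. \<exists>t. x + t *\<^sub>R EE \<in> K}"
  then obtain t where "x \<in> HH" "x + t *\<^sub>R EE \<in> K" by auto
  then show "x \<in> PP ` K" using PP_line by (metis image_eqI)
next
  fix x assume "x \<in> PP ` K"
  then obtain y where y: "y \<in> K" "x = PP y" by auto
  then show "x \<in> {x \<in> HH. \<exists>t. x + t *\<^sub>R EE \<in> K}"
    using PP_HH PP_decomp[of y] by (metis (mono_tags, lifting) mem_Collect_eq)
qed

lemma Fb_compact:
  assumes "compact (K :: (real^'n) set)"
  shows "compact (Fb K x)"
proof -
  have cl: "closed (Fb K x)"
  proof -
    have "Fb K x = (\<lambda>t. x + t *\<^sub>R EE) -` K" by (auto simp: Fb_def)
    moreover have "closed ((\<lambda>t. x + t *\<^sub>R (EE::real^'n)) -` K)"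
      by (rule continuous_closed_vimage) (use assms compact_imp_closed in \<open>auto intro!: continuous_intros\<close>)
    ultimately show ?thesis by simp
  qed
  obtain B where B: "\<forall>y\<in>K. norm y \<le> B" using assms compact_imp_bounded bounded_iff by blast
  have "\<forall>t\<in>Fb K x. norm t \<le> (B + norm x) / norm (EE::real^'n)"
  proof
    fix t assume "t \<in> Fb K x"
    then have "norm (x + t *\<^sub>R EE) \<le> B" using B by (auto simp: Fb_def)
    moreover have "norm (t *\<^sub>R (EE::real^'n)) \<le> norm (x + t *\<^sub>R EE) + norm x"
      by (metis add_diff_cancel_left' norm_triangle_ineq4 add.commute order_trans norm_minus_commute order_refl
          norm_diff_triangle_ineq diff_add_cancel norm_triangle_sub)
    ultimately have "\<bar>t\<bar> * norm (EE::real^'n) \<le> B + norm x" by simp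
    then show "norm t \<le> (B + norm x) / norm (EE::real^'n)"
      using norm_EE_pos[where 'n='n] by (simp add: pos_le_divide_eq)
  qed
  then have "bounded (Fb K x)" by (auto simp: bounded_iff)
  with cl show ?thesis by (simp add: compact_eq_bounded_closed)
qed

lemma Fb_convex:
  assumes "convex (K :: (real^'n) set)"
  shows "convex (Fb K x)"
  unfolding convex_def Fb_def
proof (intro allI impI ballI, clarsimp)
  fix s t :: real and u v :: real
  assume "x + s *\<^sub>R EE \<in> K" "x + t *\<^sub>R EE \<in> K" "0 \<le> u" "0 \<le> v" "u + v = 1"
  then have "u *\<^sub>R (x + s *\<^sub>R EE) + v *\<^sub>R (x + t *\<^sub>R EE) \<in> K"
    using assms by (simp add: convex_def)
  moreover have "u *\<^sub>R (x + s *\<^sub>R EE) + v *\<^sub>R (x + t *\<^sub>R EE) = x + (u * s + v * t) *\<^sub>R (EE::real^'n)"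
    using \<open>u + v = 1\<close> by (simp add: algebra_simps scaleR_add_left[symmetric] del: scaleR_add_left)
  ultimately show "x + (u * s + v * t) *\<^sub>R EE \<in> K" by simp
qed

lemma Fb_interval:
  assumes "compact (K :: (real^'n) set)" "convex K" "Fb K x \<noteq> {}"
  obtains a b where "a \<le> b" "Fb K x = {a..b}"
proof -
  have "connected (Fb K x) \<and> compact (Fb K x)"
    using Fb_compact Fb_convex assms convex_connected by blast
  then obtain a b where "Fb K x = {a..b}" using connected_compact_interval_1 by blast
  with assms(3) that show ?thesis by fastforce
qed

lemma SC_convex: "SC K \<Longrightarrow> convex K"
  unfolding SC_def convex_contains_open_segment
  by (metis empty_subsetI interior_subset open_segment_idem order_trans)


lemma sum_line_HH: "x \<in> HH \<Longrightarrow> (\<Sum>j\<in>UNIV. (x + t *\<^sub>R (EE::real^'n)) $ j) / real CARD('n) = t"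
  using sum_add_EE[of x t] card_pos[where 'n='n] by (simp add: HH_iff)

lemma PP_subset_HH: "PP ` K \<subseteq> HH"
  using PP_HH by blast

lemma Fb_nonempty: "x \<in> PP ` K \<Longrightarrow> Fb K x \<noteq> {}"
  using supp_eq[of K] by (auto simp: Fb_def)

lemma Fb_empty: "x \<in> HH \<Longrightarrow> x \<notin> PP ` K \<Longrightarrow> Fb K x = {}"
  using supp_eq[of K] by (auto simp: Fb_def)

lemma lift_ball:
  assumes "ball z r \<subseteq> (K :: (real^'n) set)" "w \<in> HH" "dist w (PP z) < r"
  shows "w + ((\<Sum>j\<in>UNIV. z$j) / real CARD('n)) *\<^sub>R EE \<in> K"
proof -
  let ?c = "(\<Sum>j\<in>UNIV. z$j) / real CARD('n)"
  have "dist (w + ?c *\<^sub>R EE) z = dist w (PP z)"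
    using PP_decomp[of z] by (metis dist_add_cancel2)
  then have "w + ?c *\<^sub>R EE \<in> ball z r" using assms by (simp add: dist_commute)
  then show ?thesis using assms by blast
qed

lemma interior_ball_HH:
  assumes "z \<in> interior (K :: (real^'n) set)"
  obtains r where "r > 0" "\<forall>w\<in>HH. dist w (PP z) < r \<longrightarrow> w \<in> PP ` K"
proof -
  obtain r where r: "r > 0" "ball z r \<subseteq> K"
    using assms open_interior open_contains_ball interior_subset by (metis subset_trans)
  have "\<forall>w\<in>HH. dist w (PP z) < r \<longrightarrow> w \<in> PP ` K"
  proof (intro ballI impI)
    fix w assume "w \<in> HH" "dist w (PP z) < r"
    then have "w + ((\<Sum>j\<in>UNIV. z$j) / real CARD('n)) *\<^sub>R EE \<in> K" using lift_ball r by blast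
    then show "w \<in> PP ` K" using PP_line[OF \<open>w \<in> HH\<close>] by (metis image_eqI)
  qed
  with r that show ?thesis by blast
qed

lemma PP_rel_interior:
  assumes "z \<in> interior (K :: (real^'n) set)"
  shows "PP z \<in> rel_interior (PP ` K)"
proof -
  obtain r where r: "r > 0" "\<forall>w\<in>HH. dist w (PP z) < r \<longrightarrow> w \<in> PP ` K"
    using interior_ball_HH assms by blast
  have "affine hull (PP ` K) \<subseteq> HH"
    by (rule hull_minimal[OF PP_subset_HH]) (simp add: HH_hyperplane affine_hyperplane)
  then have "ball (PP z) r \<inter> affine hull (PP ` K) \<subseteq> PP ` K"
    using r by (auto simp: dist_commute)
  moreover have "PP z \<in> PP ` K" using assms interior_subset by blast
  ultimately show ?thesis using r by (auto simp: mem_rel_interior_ball)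
qed

lemma PP_comb: "PP (a *\<^sub>R p + b *\<^sub>R (q::real^'n)) = a *\<^sub>R PP p + b *\<^sub>R PP q"
  by (simp add: PP_def sum.distrib sum_distrib_left add_divide_distrib vec_eq_iff algebra_simps)

lemma supp_strictly_convex:
  assumes "SC (K :: (real^'n) set)"
  shows "strictly_convex_set (PP ` K)"
  unfolding strictly_convex_set_def
proof (intro conjI ballI impI subsetI)
  show "convex (PP ` K)" using SC_convex[OF assms] linear_PP convex_linear_image by blast
next
  fix x y z assume xy: "x \<in> PP ` K" "y \<in> PP ` K" "x \<noteq> y" and z: "z \<in> open_segment x y"
  then obtain p q where pq: "p \<in> K" "q \<in> K" "x = PP p" "y = PP q" by auto
  from z obtain u where u: "0 < u" "u < 1" "z = (1 - u) *\<^sub>R x + u *\<^sub>R y" by (auto simp: in_segment)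
  have "p \<noteq> q" using pq xy by auto
  have "(1 - u) *\<^sub>R p + u *\<^sub>R q \<in> open_segment p q" using u \<open>p \<noteq> q\<close> by (auto simp: in_segment)
  then have w: "(1 - u) *\<^sub>R p + u *\<^sub>R q \<in> interior K" using assms pq \<open>p \<noteq> q\<close> by (auto simp: SC_def)
  have "PP ((1 - u) *\<^sub>R p + u *\<^sub>R q) = z"
    using u pq by (simp add: PP_comb)
  with PP_rel_interior[OF w] show "z \<in> rel_interior (PP ` K)" by simp
qed

lemma supp_compact: "compact (K :: (real^'n) set) \<Longrightarrow> compact (PP ` K)"
  using compact_continuous_image linear_continuous_on linear_PP
  by (metis linear_linear)

lemma supp_aff_dim:
  assumes "interior (K :: (real^'n) set) \<noteq> {}"
  shows "aff_dim (PP ` K) = int CARD('n) - 1"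
proof (rule antisym)
  have "aff_dim (PP ` K) \<le> aff_dim (HH :: (real^'n) set)"
    by (rule aff_dim_subset[OF PP_subset_HH])
  also have "\<dots> = int CARD('n) - 1"
    using EE_nz[where 'n='n] by (simp add: HH_hyperplane)
  finally show "aff_dim (PP ` K) \<le> int CARD('n) - 1" .
next
  obtain z where z: "z \<in> interior K" using assms by blast
  obtain r where r: "r > 0" "\<forall>w\<in>HH. dist w (PP z) < r \<longrightarrow> w \<in> PP ` K"
    using interior_ball_HH z by blast
  have sub: "HH \<inter> ball (PP z) r \<subseteq> PP ` K" using r by (auto simp: dist_commute)
  have "aff_dim (HH \<inter> ball (PP z) r) = aff_dim (HH :: (real^'n) set)"
  proof (rule aff_dim_convex_Int_open)
    show "HH \<inter> ball (PP z) r \<noteq> {}" using r PP_HH[of z] by (metis IntI centre_in_ball empty_iff)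
  qed (auto simp: HH_hyperplane convex_hyperplane)
  also have "\<dots> = int CARD('n) - 1"
    using EE_nz[where 'n='n] by (simp add: HH_hyperplane)
  finally show "int CARD('n) - 1 \<le> aff_dim (PP ` K)"
    using aff_dim_subset[OF sub] by simp
qed


lemma fiber_widen:
  assumes "SC (K :: (real^'n) set)" "x \<in> PP ` K" "y \<in> PP ` K" "x \<noteq> y" "0 < u" "u < 1"
    "s \<in> Fb K x" "t \<in> Fb K y"
  obtains e where "e > 0" "(1 - u) * s + u * t + e \<in> Fb K ((1 - u) *\<^sub>R x + u *\<^sub>R y)"
    "(1 - u) * s + u * t - e \<in> Fb K ((1 - u) *\<^sub>R x + u *\<^sub>R y)"
proof -
  let ?p = "x + s *\<^sub>R EE" and ?q = "y + t *\<^sub>R EE"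
  let ?z = "(1 - u) *\<^sub>R x + u *\<^sub>R y" and ?c = "(1 - u) * s + u * t"
  have xH: "x \<in> HH" "y \<in> HH" using assms PP_subset_HH by auto
  have pq: "?p \<in> K" "?q \<in> K" using assms by (auto simp: Fb_def)
  have "?p \<noteq> ?q" using PP_line[OF xH(1), of s] PP_line[OF xH(2), of t] assms(4) by metis
  then have "(1 - u) *\<^sub>R ?p + u *\<^sub>R ?q \<in> open_segment ?p ?q" using assms by (auto simp: in_segment)
  then have w: "(1 - u) *\<^sub>R ?p + u *\<^sub>R ?q \<in> interior K"
    using assms(1) pq \<open>?p \<noteq> ?q\<close> by (auto simp: SC_def)
  have weq: "(1 - u) *\<^sub>R ?p + u *\<^sub>R ?q = ?z + ?c *\<^sub>R EE"
    by (simp add: algebra_simps)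
  obtain r where r0: "r > 0" "ball (?z + ?c *\<^sub>R EE) r \<subseteq> interior K"
    using w weq open_interior[of K] open_contains_ball by metis
  then have r: "r > 0" "ball (?z + ?c *\<^sub>R EE) r \<subseteq> K" using interior_subset by blast+
  define e where "e = r / (2 * norm (EE::real^'n))"
  have ne: "norm (EE::real^'n) > 0" by (rule norm_EE_pos)
  have e: "e > 0" using r ne by (simp add: e_def)
  have en: "e * norm (EE::real^'n) < r" using r ne by (simp add: e_def)
  have "?z + (?c + e) *\<^sub>R EE \<in> ball (?z + ?c *\<^sub>R EE) r"
    using en e by (simp add: dist_norm algebra_simps)
  then have m1: "?z + (?c + e) *\<^sub>R EE \<in> K" using r(2) by blast
  have "?z + (?c - e) *\<^sub>R EE \<in> ball (?z + ?c *\<^sub>R EE) r"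
    using en e by (simp add: dist_norm algebra_simps)
  then have m2: "?z + (?c - e) *\<^sub>R EE \<in> K" using r(2) by blast
  show ?thesis by (rule that[OF e]) (use m1 m2 in \<open>simp_all add: Fb_def\<close>)
qed

lemma Fb_meas:
  assumes "compact (K :: (real^'n) set)" "convex K" "x \<in> PP ` K"
  obtains a b where "a \<le> b" "Fb K x = {a..b}" "measure lborel (Fb K x) = b - a"
  using Fb_interval[OF assms(1,2) Fb_nonempty[OF assms(3)]] by (metis measure_lborel_Icc)

lemma supp_concave:
  assumes "compact (K :: (real^'n) set)" "SC K"
  shows "strictly_concave_on (PP ` K) (\<lambda>x. norm (EE::real^'n) * measure lborel (Fb K x))"
  unfolding strictly_concave_on_def
proof (intro conjI ballI allI impI)
  have cK: "convex K" using SC_convex assms by blast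
  show cS: "convex (PP ` K)" using cK linear_PP convex_linear_image by blast
  fix x y and u :: real assume xy: "x \<in> PP ` K" "y \<in> PP ` K" and u: "x \<noteq> y \<and> 0 < u \<and> u < 1"
  let ?z = "(1 - u) *\<^sub>R x + u *\<^sub>R y"
  have zS: "?z \<in> PP ` K" using convexD[OF cS xy, of "1 - u" u] u by simp
  obtain ax bx where X: "ax \<le> bx" "Fb K x = {ax..bx}" "measure lborel (Fb K x) = bx - ax"
    using Fb_meas[OF assms(1) cK xy(1)] by blast
  obtain ay by' where Y: "ay \<le> by'" "Fb K y = {ay..by'}" "measure lborel (Fb K y) = by' - ay"
    using Fb_meas[OF assms(1) cK xy(2)] by blast
  obtain az bz where Z: "az \<le> bz" "Fb K ?z = {az..bz}" "measure lborel (Fb K ?z) = bz - az"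
    using Fb_meas[OF assms(1) cK zS] by blast
  have mem: "bx \<in> Fb K x" "by' \<in> Fb K y" "ax \<in> Fb K x" "ay \<in> Fb K y" using X Y by auto
  obtain e1 where e1: "e1 > 0" "(1 - u) * bx + u * by' + e1 \<in> Fb K ?z"
    using fiber_widen[OF assms(2) xy _ _ _ mem(1,2), of u] u by blast
  obtain e2 where e2: "e2 > 0" "(1 - u) * ax + u * ay - e2 \<in> Fb K ?z"
    using fiber_widen[OF assms(2) xy _ _ _ mem(3,4), of u] u by blast
  have "bz \<ge> (1 - u) * bx + u * by' + e1" "az \<le> (1 - u) * ax + u * ay - e2"
    using e1 e2 Z by auto
  then have "measure lborel (Fb K ?z) > (1 - u) * measure lborel (Fb K x) + u * measure lborel (Fb K y)"
    using X Y Z e1 e2 by (simp add: algebra_simps)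
  then show "norm (EE::real^'n) * measure lborel (Fb K ?z) >
      (1 - u) * (norm (EE::real^'n) * measure lborel (Fb K x)) + u * (norm (EE::real^'n) * measure lborel (Fb K y))"
    using norm_EE_pos[where 'n='n]
    by (metis (no_types, lifting) distrib_left mult.left_commute mult_strict_left_mono)
qed


lemma interior_on_line:
  assumes "SC K" "x + a *\<^sub>R EE \<in> K" "x + b *\<^sub>R (EE::real^'n) \<in> K" "a < s" "s < b"
  shows "x + s *\<^sub>R EE \<in> interior K"
proof -
  have ne: "x + a *\<^sub>R EE \<noteq> x + b *\<^sub>R (EE::real^'n)"
    using assms(4,5) EE_nz[where 'n='n] by auto
  define u where "u = (s - a) / (b - a)"
  have u: "0 < u" "u < 1" using assms(4,5) by (auto simp: u_def field_simps)
  have "u * (b - a) = s - a" using assms(4,5) by (simp add: u_def)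
  moreover have "(1 - u) * a + u * b = a + u * (b - a)" by (simp add: algebra_simps)
  ultimately have "(1 - u) * a + u * b = s" by linarith
  moreover have "(1 - u) *\<^sub>R (x + a *\<^sub>R EE) + u *\<^sub>R (x + b *\<^sub>R EE) = x + ((1 - u) * a + u * b) *\<^sub>R (EE::real^'n)"
    by (simp add: algebra_simps)
  ultimately have "(1 - u) *\<^sub>R (x + a *\<^sub>R EE) + u *\<^sub>R (x + b *\<^sub>R EE) = x + s *\<^sub>R (EE::real^'n)"
    by simp
  then have "x + s *\<^sub>R EE \<in> open_segment (x + a *\<^sub>R EE) (x + b *\<^sub>R EE)"
    using u ne unfolding in_segment by metis
  then show ?thesis using assms(1-3) ne unfolding SC_def by blast
qed

lemma closed_avoid:
  assumes "closed C" "x0 \<notin> C"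
  obtains d where "d > 0" "\<forall>x. dist x x0 < d \<longrightarrow> x \<notin> C"
proof -
  have "open (- C)" using assms by auto
  then obtain d where d: "d > 0" "ball x0 d \<subseteq> - C" using assms open_contains_ball by blast
  have "\<forall>x. dist x x0 < d \<longrightarrow> x \<notin> C"
  proof (intro allI impI)
    fix x assume "dist x x0 < d"
    then have "x \<in> ball x0 d" by (simp add: dist_commute)
    then show "x \<notin> C" using d by blast
  qed
  then show ?thesis using that d by blast
qed

lemma interior_ball_line:
  assumes "x0 + s *\<^sub>R EE \<in> interior (K :: (real^'n) set)"
  obtains r where "r > 0" "\<forall>x. dist x x0 < r \<longrightarrow> x + s *\<^sub>R EE \<in> K"
proof -
  obtain r where r: "r > 0" "ball (x0 + s *\<^sub>R EE) r \<subseteq> interior K"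
    using assms open_interior[of K] open_contains_ball by metis
  have "\<forall>x. dist x x0 < r \<longrightarrow> x + s *\<^sub>R EE \<in> K"
  proof (intro allI impI)
    fix x assume "dist x x0 < r"
    then have "x + s *\<^sub>R EE \<in> ball (x0 + s *\<^sub>R EE) r" by (simp add: dist_commute)
    then show "x + s *\<^sub>R EE \<in> K" using r interior_subset by blast
  qed
  with r that show ?thesis by blast
qed

lemma upper_avoid:
  assumes "compact (K :: (real^'n) set)" "x0 \<in> HH" "Fb K x0 \<subseteq> {a0..b0}" "\<eta> > 0"
  obtains d where "d > 0" "\<forall>x\<in>HH. dist x x0 < d \<longrightarrow> Fb K x \<subseteq> {a0 - \<eta> <..< b0 + \<eta>}"
proof -
  let ?sig = "\<lambda>y::real^'n. (\<Sum>j\<in>UNIV. y$j) / real CARD('n)"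
  have csig: "continuous_on UNIV ?sig" by (intro continuous_intros) auto
  let ?C1 = "PP ` (K \<inter> {y. b0 + \<eta> \<le> ?sig y})"
  let ?C2 = "PP ` (K \<inter> {y. ?sig y \<le> a0 - \<eta>})"
  have "closed {y. b0 + \<eta> \<le> ?sig y}" "closed {y. ?sig y \<le> a0 - \<eta>}"
    by (auto intro!: closed_Collect_le continuous_intros)
  then have "compact ?C1" "compact ?C2"
    using assms(1) by (auto intro!: supp_compact compact_Int_closed)
  then have cl: "closed ?C1" "closed ?C2" by (auto intro: compact_imp_closed)
  have n1: "x0 \<notin> ?C1"
  proof
    assume "x0 \<in> ?C1"
    then obtain y where y: "y \<in> K" "b0 + \<eta> \<le> ?sig y" "x0 = PP y" by auto
    then have "x0 + ?sig y *\<^sub>R EE \<in> K" using PP_decomp[of y] by simp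
    then have "?sig y \<in> Fb K x0" by (simp add: Fb_def)
    then show False using assms y by auto
  qed
  have n2: "x0 \<notin> ?C2"
  proof
    assume "x0 \<in> ?C2"
    then obtain y where y: "y \<in> K" "?sig y \<le> a0 - \<eta>" "x0 = PP y" by auto
    then have "x0 + ?sig y *\<^sub>R EE \<in> K" using PP_decomp[of y] by simp
    then have "?sig y \<in> Fb K x0" by (simp add: Fb_def)
    then show False using assms y by auto
  qed
  obtain d1 where d1: "d1 > 0" "\<forall>x. dist x x0 < d1 \<longrightarrow> x \<notin> ?C1" using closed_avoid[OF cl(1) n1] by blast
  obtain d2 where d2: "d2 > 0" "\<forall>x. dist x x0 < d2 \<longrightarrow> x \<notin> ?C2" using closed_avoid[OF cl(2) n2] by blast
  have "\<forall>x\<in>HH. dist x x0 < min d1 d2 \<longrightarrow> Fb K x \<subseteq> {a0 - \<eta> <..< b0 + \<eta>}"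
  proof (intro ballI impI subsetI)
    fix x t assume x: "x \<in> HH" "dist x x0 < min d1 d2" and t: "t \<in> Fb K x"
    have yK: "x + t *\<^sub>R EE \<in> K" using t by (simp add: Fb_def)
    have sg: "?sig (x + t *\<^sub>R EE) = t" using sum_line_HH[OF x(1)] by simp
    have pp: "PP (x + t *\<^sub>R EE) = x" using PP_line[OF x(1)] by simp
    have "\<not> b0 + \<eta> \<le> t"
    proof
      assume "b0 + \<eta> \<le> t"
      then have "PP (x + t *\<^sub>R EE) \<in> ?C1" using yK sg by (intro imageI IntI) simp_all
      then have "x \<in> ?C1" using pp by simp
      then show False using d1 x by auto
    qed
    moreover have "\<not> t \<le> a0 - \<eta>"
    proof
      assume "t \<le> a0 - \<eta>"
      then have "PP (x + t *\<^sub>R EE) \<in> ?C2" using yK sg by (intro imageI IntI) simp_all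
      then have "x \<in> ?C2" using pp by simp
      then show False using d2 x by auto
    qed
    ultimately show "t \<in> {a0 - \<eta> <..< b0 + \<eta>}" by auto
  qed
  then show ?thesis using that d1 d2 by (meson min_less_iff_conj)
qed


lemma meas_cont:
  assumes K: "compact (K :: (real^'n) set)" "SC K" and x0: "x0 \<in> HH" and e: "e > 0"
  shows "\<exists>d>0. \<forall>x\<in>HH. dist x x0 < d \<longrightarrow>
           \<bar>measure lborel (Fb K x) - measure lborel (Fb K x0)\<bar> < e"
proof (cases "x0 \<in> PP ` K")
  case False
  have "closed (PP ` K)" using supp_compact[OF K(1)] compact_imp_closed by blast
  then obtain d where d: "d > 0" "\<forall>x. dist x x0 < d \<longrightarrow> x \<notin> PP ` K"
    using closed_avoid False by blast
  have "Fb K x0 = {}" using Fb_empty[OF x0 False] .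
  moreover have "\<forall>x\<in>HH. dist x x0 < d \<longrightarrow> Fb K x = {}" using d Fb_empty by blast
  ultimately show ?thesis using d e by auto
next
  case True
  have cK: "convex K" using SC_convex K by blast
  obtain a0 b0 where ab0: "a0 \<le> b0" "Fb K x0 = {a0..b0}" "measure lborel (Fb K x0) = b0 - a0"
    using Fb_meas[OF K(1) cK True] by blast
  define \<eta> where "\<eta> = e / 3"
  have \<eta>: "\<eta> > 0" using e by (simp add: \<eta>_def)
  obtain d1 where d1: "d1 > 0" "\<forall>x\<in>HH. dist x x0 < d1 \<longrightarrow> Fb K x \<subseteq> {a0 - \<eta> <..< b0 + \<eta>}"
    using upper_avoid[OF K(1) x0 _ \<eta>, of a0 b0] ab0 by auto
  have lower: "\<exists>d3>0. \<forall>x\<in>HH. dist x x0 < d3 \<longrightarrow>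
      (a0 = b0 \<or> (\<exists>s1 s2. s1 \<in> Fb K x \<and> s2 \<in> Fb K x \<and> s2 - s1 \<ge> b0 - a0 - 2 * \<eta>))"
  proof (cases "a0 = b0")
    case True then show ?thesis by (intro exI[of _ 1]) auto
  next
    case False
    then have lt: "a0 < b0" using ab0 by auto
    define \<eta>' where "\<eta>' = min \<eta> ((b0 - a0) / 3)"
    have h3: "\<eta>' \<le> (b0 - a0) / 3" unfolding \<eta>'_def by (rule min.cobounded2)
    have h4: "\<eta>' > 0" "\<eta>' \<le> \<eta>" using \<eta> lt by (auto simp: \<eta>'_def)
    have \<eta>': "\<eta>' > 0" "\<eta>' \<le> \<eta>" "3 * \<eta>' \<le> b0 - a0" using h3 h4 by (linarith, linarith, simp add: le_divide_eq mult.commute)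
    have e0: "x0 + a0 *\<^sub>R EE \<in> K" "x0 + b0 *\<^sub>R EE \<in> K" using ab0 by (auto simp: Fb_def)
    have i1: "x0 + (a0 + \<eta>') *\<^sub>R EE \<in> interior K"
      by (rule interior_on_line[OF K(2) e0]) (use \<eta>' in auto)
    have i2: "x0 + (b0 - \<eta>') *\<^sub>R EE \<in> interior K"
      by (rule interior_on_line[OF K(2) e0]) (use \<eta>' in auto)
    obtain r1 where r1: "r1 > 0" "\<forall>x. dist x x0 < r1 \<longrightarrow> x + (a0 + \<eta>') *\<^sub>R EE \<in> K"
      using interior_ball_line[OF i1] by blast
    obtain r2 where r2: "r2 > 0" "\<forall>x. dist x x0 < r2 \<longrightarrow> x + (b0 - \<eta>') *\<^sub>R EE \<in> K"
      using interior_ball_line[OF i2] by blast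
    show ?thesis
    proof (intro exI[of _ "min r1 r2"] conjI ballI impI)
      show "min r1 r2 > 0" using r1 r2 by simp
      fix x assume "x \<in> HH" "dist x x0 < min r1 r2"
      then have "a0 + \<eta>' \<in> Fb K x" "b0 - \<eta>' \<in> Fb K x" using r1 r2 by (auto simp: Fb_def)
      moreover have "(b0 - \<eta>') - (a0 + \<eta>') \<ge> b0 - a0 - 2 * \<eta>" using \<eta>' by simp
      ultimately show "a0 = b0 \<or> (\<exists>s1 s2. s1 \<in> Fb K x \<and> s2 \<in> Fb K x \<and> s2 - s1 \<ge> b0 - a0 - 2 * \<eta>)"
        by blast
    qed
  qed
  then obtain d3 where d3: "d3 > 0" "\<forall>x\<in>HH. dist x x0 < d3 \<longrightarrow>
      (a0 = b0 \<or> (\<exists>s1 s2. s1 \<in> Fb K x \<and> s2 \<in> Fb K x \<and> s2 - s1 \<ge> b0 - a0 - 2 * \<eta>))" by blast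
  show ?thesis
  proof (intro exI[of _ "min d1 d3"] conjI ballI impI)
    show "min d1 d3 > 0" using d1 d3 by simp
    fix x assume x: "x \<in> HH" "dist x x0 < min d1 d3"
    have up: "Fb K x \<subseteq> {a0 - \<eta> <..< b0 + \<eta>}" using d1 x by auto
    have lo: "a0 = b0 \<or> (\<exists>s1 s2. s1 \<in> Fb K x \<and> s2 \<in> Fb K x \<and> s2 - s1 \<ge> b0 - a0 - 2 * \<eta>)"
      using d3 x by auto
    show "\<bar>measure lborel (Fb K x) - measure lborel (Fb K x0)\<bar> < e"
    proof (cases "Fb K x = {}")
      case True
      then have "a0 = b0" using lo by auto
      then show ?thesis using True ab0 e by simp
    next
      case False
      then have xS: "x \<in> PP ` K" using supp_eq[of K] x(1) by (auto simp: Fb_def)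
      obtain a b where ab: "a \<le> b" "Fb K x = {a..b}" "measure lborel (Fb K x) = b - a"
        using Fb_meas[OF K(1) cK xS] by blast
      have "a0 - \<eta> < a" "b < b0 + \<eta>" using up ab by auto
      moreover have "b - a \<ge> b0 - a0 - 2 * \<eta>"
        using lo ab ab0 \<eta> by auto
      ultimately show ?thesis using ab ab0 by (simp add: \<eta>_def abs_less_iff)
    qed
  qed
qed

lemma tau_cont:
  assumes K: "compact (K :: (real^'n) set)" "SC K"
  shows "continuous_on HH (\<lambda>x. norm (EE::real^'n) * measure lborel (Fb K x))"
  unfolding continuous_on_iff
proof (intro ballI allI impI)
  fix x0 :: "real^'n" and e :: real assume x0: "x0 \<in> HH" and e: "e > 0"
  have ne: "norm (EE::real^'n) > 0" by (rule norm_EE_pos)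
  obtain d where d: "d > 0" "\<forall>x\<in>HH. dist x x0 < d \<longrightarrow>
           \<bar>measure lborel (Fb K x) - measure lborel (Fb K x0)\<bar> < e / norm (EE::real^'n)"
    using meas_cont[OF K x0, of "e / norm (EE::real^'n)"] e ne by auto
  show "\<exists>d>0. \<forall>x'\<in>HH. dist x' x0 < d \<longrightarrow>
      dist (norm (EE::real^'n) * measure lborel (Fb K x')) (norm (EE::real^'n) * measure lborel (Fb K x0)) < e"
  proof (intro exI[of _ d] conjI ballI impI)
    fix x :: "real^'n" assume "x \<in> HH" "dist x x0 < d"
    then have "\<bar>measure lborel (Fb K x) - measure lborel (Fb K x0)\<bar> < e / norm (EE::real^'n)"
      using d by auto
    then have "norm (EE::real^'n) * \<bar>measure lborel (Fb K x) - measure lborel (Fb K x0)\<bar> < e"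
      using ne by (simp add: pos_less_divide_eq mult.commute)
    then show "dist (norm (EE::real^'n) * measure lborel (Fb K x)) (norm (EE::real^'n) * measure lborel (Fb K x0)) < e"
      using ne by (simp add: dist_real_def abs_mult right_diff_distrib[symmetric])
  qed (use d in auto)
qed




lemma strict_concave_MVT:
  fixes f f' :: "real \<Rightarrow> real"
  assumes der: "\<And>x. a \<le> x \<Longrightarrow> x \<le> b \<Longrightarrow> (f has_real_derivative f' x) (at x)"
    and dec: "\<And>x y. a \<le> x \<Longrightarrow> x < y \<Longrightarrow> y \<le> b \<Longrightarrow> f' y < f' x"
    and ab: "a < b" and u: "0 < u" "u < 1"
  shows "f ((1 - u) * a + u * b) > (1 - u) * f a + u * f b"
proof -
  define m where "m = (1 - u) * a + u * b"
  have ma: "m - a = u * (b - a)" by (simp add: m_def algebra_simps)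
  have bm: "b - m = (1 - u) * (b - a)" by (simp add: m_def algebra_simps)
  have p1: "u * (b - a) > 0" using u ab by simp
  have p2: "(1 - u) * (b - a) > 0" using u ab by simp
  have am1: "a < m" using p1 ma by linarith
  have am2: "m < b" using p2 bm by linarith
  note am = am1 am2
  obtain z1 where z1: "a < z1" "z1 < m" "f m - f a = (m - a) * f' z1"
    using MVT2[OF am(1), of f f'] der am by auto
  obtain z2 where z2: "m < z2" "z2 < b" "f b - f m = (b - m) * f' z2"
    using MVT2[OF am(2), of f f'] der am by auto
  have d: "f' z2 < f' z1" using dec z1 z2 by auto
  have pos: "u * (1 - u) * (b - a) > 0" using u ab by simp
  have "f m - ((1 - u) * f a + u * f b) = (1 - u) * (f m - f a) - u * (f b - f m)"
    by (simp add: algebra_simps)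
  also have "\<dots> = (1 - u) * (u * (b - a) * f' z1) - u * ((1 - u) * (b - a) * f' z2)"
    using z1(3) z2(3) ma bm by simp
  also have "\<dots> = u * (1 - u) * (b - a) * (f' z1 - f' z2)"
    by (simp add: algebra_simps)
  also have "\<dots> > 0" using pos d by simp
  finally show ?thesis by (simp add: m_def)
qed

lemma lnsfun_deriv:
  assumes "0 < t" "t < 2 * pi"
  shows "((\<lambda>t. ln (sfun t)) has_real_derivative cos (t / 2) / (2 * sin (t / 2))) (at t)"
proof -
  have s: "sin (t / 2) > 0" using assms by (intro sin_gt_zero) auto
  have d1: "((\<lambda>t. 2 * sin (t / 2)) has_real_derivative 2 * (cos (t / 2) * (1 / 2))) (at t)"
    by (auto intro!: derivative_eq_intros)
  have "((\<lambda>t. ln (2 * sin (t / 2))) has_real_derivative 1 / (2 * sin (t / 2)) * (2 * (cos (t / 2) * (1 / 2)))) (at t)"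
    by (rule DERIV_chain2[OF DERIV_ln_divide d1]) (use s in simp)
  moreover have "1 / (2 * sin (t / 2)) * (2 * (cos (t / 2) * (1 / 2))) = cos (t / 2) / (2 * sin (t / 2))"
    by simp
  ultimately show ?thesis unfolding sfun_def by simp
qed

lemma lnsfun_dec:
  assumes "0 < y" "y < x" "x < 2 * pi"
  shows "cos (x / 2) / (2 * sin (x / 2)) < cos (y / 2) / (2 * sin (y / 2))"
proof -
  have sx: "sin (x / 2) > 0" and sy: "sin (y / 2) > 0" using assms by (auto intro!: sin_gt_zero)
  have "sin (x / 2 - y / 2) > 0" using assms by (intro sin_gt_zero) auto
  then have "cos (x / 2) * sin (y / 2) < cos (y / 2) * sin (x / 2)"
    by (simp add: sin_diff algebra_simps)
  then show ?thesis using sx sy by (simp add: field_simps)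
qed

lemma lnsfun_concave:
  assumes "0 < a" "a < 2 * pi" "0 < b" "b < 2 * pi" "a \<noteq> b" "0 < u" "u < 1"
  shows "ln (sfun ((1 - u) * a + u * b)) > (1 - u) * ln (sfun a) + u * ln (sfun b)"
proof -
  have key: "ln (sfun ((1 - v) * c + v * d)) > (1 - v) * ln (sfun c) + v * ln (sfun d)"
    if "0 < c" "c < d" "d < 2 * pi" "0 < v" "v < 1" for c d v
    by (rule strict_concave_MVT[where f'="\<lambda>t. cos (t / 2) / (2 * sin (t / 2))"])
       (use that in \<open>auto intro!: lnsfun_deriv lnsfun_dec\<close>)
  show ?thesis
  proof (cases "a < b")
    case True then show ?thesis using key assms by auto
  next
    case False
    then have "b < a" using assms by auto
    from key[OF _ this _, of "1 - u"] assms
    show ?thesis by (simp add: algebra_simps)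
  qed
qed




lemma VV0_coord:
  assumes "p \<in> VV0 h" "0 < h"
  shows "0 < p$j \<and> p$j < 2 * pi \<and> sfun (p$j) > 0"
proof -
  have mem: "h \<le> \<bar>\<Prod>j\<in>UNIV. sfun (p $ j)\<bar> \<and> (\<forall>j. 0 \<le> p $ j \<and> p $ j \<le> 2 * pi)"
    using assms(1) unfolding VV0_def VV_def by blast
  then have h: "h \<le> \<bar>\<Prod>j\<in>UNIV. sfun (p $ j)\<bar>" by blast
  have b: "0 \<le> p$j" "p$j \<le> 2 * pi" using mem by blast+
  have "(\<Prod>j\<in>UNIV. sfun (p $ j)) \<noteq> 0"
  proof
    assume "(\<Prod>j\<in>UNIV. sfun (p $ j)) = 0"
    with h assms(2) show False by simp
  qed
  then have nz: "sfun (p$j) \<noteq> 0" by (simp add: prod_zero_iff)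
  have "p$j \<noteq> 0"
  proof
    assume "p$j = 0"
    then have "sfun (p$j) = 0" by (simp add: sfun_def)
    with nz show False by blast
  qed
  moreover have "p$j \<noteq> 2 * pi"
  proof
    assume "p$j = 2 * pi"
    then have "sfun (p$j) = 0" by (simp add: sfun_def)
    with nz show False by blast
  qed
  ultimately have lt: "0 < p$j" "p$j < 2 * pi" using b by linarith+
  have "sin (p$j / 2) > 0" using lt by (intro sin_gt_zero) auto
  then show ?thesis using lt by (simp add: sfun_def)
qed

definition UU :: "real \<Rightarrow> (real^'n) set" where
  "UU h = {x. (\<forall>j. 0 < x$j \<and> x$j < 2 * pi) \<and> h < \<bar>\<Prod>j\<in>UNIV. sfun (x $ j)\<bar>}"

lemma UU_open: "open (UU h :: (real^'n) set)"
proof -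
  have "UU h = box 0 (\<chi> j. 2 * pi) \<inter> {x::real^'n. h < \<bar>\<Prod>j\<in>UNIV. sfun (x $ j)\<bar>}"
    by (auto simp: UU_def mem_box_cart)
  moreover have "open {x::real^'n. h < \<bar>\<Prod>j\<in>UNIV. sfun (x $ j)\<bar>}"
    unfolding sfun_def by (intro open_Collect_less continuous_intros) auto
  ultimately show ?thesis by (metis open_Int open_box)
qed

lemma UU_sub: "UU h \<subseteq> VV0 h"
  by (auto simp: UU_def VV0_def VV_def less_imp_le)

lemma VV0_compact: "compact (VV0 h :: (real^'n) set)"
proof -
  have "VV0 h = cbox 0 (\<chi> j. 2 * pi) \<inter> {x::real^'n. h \<le> \<bar>\<Prod>j\<in>UNIV. sfun (x $ j)\<bar>}"
    by (auto simp: VV0_def VV_def mem_box_cart)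
  moreover have "closed {x::real^'n. h \<le> \<bar>\<Prod>j\<in>UNIV. sfun (x $ j)\<bar>}"
    unfolding sfun_def by (intro closed_Collect_le continuous_intros) auto
  ultimately show ?thesis by (simp add: compact_Int_closed)
qed

lemma VV0_strict:
  assumes "0 < h" "p \<in> VV0 h" "q \<in> VV0 h" "p \<noteq> q" "0 < u" "u < 1"
  shows "(1 - u) *\<^sub>R p + u *\<^sub>R (q :: real^'n) \<in> UU h"
proof -
  let ?z = "(1 - u) *\<^sub>R p + u *\<^sub>R q"
  have cp: "\<And>j. 0 < p$j \<and> p$j < 2 * pi \<and> sfun (p$j) > 0" using VV0_coord assms by blast
  have cq: "\<And>j. 0 < q$j \<and> q$j < 2 * pi \<and> sfun (q$j) > 0" using VV0_coord assms by blast
  have zc: "0 < ?z$j \<and> ?z$j < 2 * pi" for j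
  proof -
    have "?z$j = (1 - u) * p$j + u * q$j" by simp
    moreover have "(1 - u) * p$j + u * q$j > 0" using cp[of j] cq[of j] assms(5,6)
      by (intro add_pos_pos mult_pos_pos) auto
    moreover have "(1 - u) * p$j + u * q$j < (1 - u) * (2 * pi) + u * (2 * pi)"
      using cp[of j] cq[of j] assms(5,6)
      by (intro add_strict_mono mult_strict_left_mono) auto
    ultimately show ?thesis by (simp add: algebra_simps)
  qed
  have zs: "sfun (?z$j) > 0" for j
  proof -
    have "sin (?z$j / 2) > 0" using zc[of j] by (intro sin_gt_zero) auto
    then show ?thesis by (simp add: sfun_def)
  qed
  have le: "ln (sfun (?z$j)) \<ge> (1 - u) * ln (sfun (p$j)) + u * ln (sfun (q$j))" for j
  proof (cases "p$j = q$j")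
    case True then show ?thesis by (simp add: algebra_simps)
  next
    case False
    then show ?thesis using lnsfun_concave[of "p$j" "q$j" u] cp[of j] cq[of j] assms(5,6) by simp
  qed
  obtain j0 where j0: "p$j0 \<noteq> q$j0" using assms(4) by (auto simp: vec_eq_iff)
  have lt: "ln (sfun (?z$j0)) > (1 - u) * ln (sfun (p$j0)) + u * ln (sfun (q$j0))"
    using lnsfun_concave[of "p$j0" "q$j0" u] cp[of j0] cq[of j0] assms(5,6) j0 by simp
  have S0: "(\<Sum>j\<in>UNIV. (1 - u) * ln (sfun (p$j)) + u * ln (sfun (q$j))) < (\<Sum>j\<in>UNIV. ln (sfun (?z$j)))"
    by (rule sum_strict_mono_ex1) (use le lt in auto)
  have lp: "ln (\<Prod>j\<in>UNIV. sfun (p$j)) = (\<Sum>j\<in>UNIV. ln (sfun (p$j)))"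
    by (rule ln_prod) (use cp in \<open>auto simp: less_imp_neq[symmetric]\<close>)
  have lq: "ln (\<Prod>j\<in>UNIV. sfun (q$j)) = (\<Sum>j\<in>UNIV. ln (sfun (q$j)))"
    by (rule ln_prod) (use cq in \<open>auto simp: less_imp_neq[symmetric]\<close>)
  have ds: "(\<Sum>j\<in>UNIV. (1 - u) * ln (sfun (p$j)) + u * ln (sfun (q$j)))
      = (1 - u) * (\<Sum>j\<in>UNIV. ln (sfun (p$j))) + u * (\<Sum>j\<in>UNIV. ln (sfun (q$j)))"
    by (simp only: sum.distrib sum_distrib_left)
  have lz: "ln (\<Prod>j\<in>UNIV. sfun (?z$j)) = (\<Sum>j\<in>UNIV. ln (sfun (?z$j)))"
    by (rule ln_prod) (use zs in \<open>auto simp: less_imp_neq[symmetric]\<close>)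
  have pp: "(\<Prod>j\<in>UNIV. sfun (p$j)) > 0" "(\<Prod>j\<in>UNIV. sfun (q$j)) > 0"
    using cp cq by (auto intro!: prod_pos)
  have hh: "h \<le> \<bar>\<Prod>j\<in>UNIV. sfun (p$j)\<bar>" "h \<le> \<bar>\<Prod>j\<in>UNIV. sfun (q$j)\<bar>"
    using assms(2,3) by (auto simp: VV0_def VV_def)
  have l1: "ln h \<le> ln (\<Prod>j\<in>UNIV. sfun (p$j))" "ln h \<le> ln (\<Prod>j\<in>UNIV. sfun (q$j))"
    using hh pp assms(1) by (simp_all add: abs_of_pos)
  have S: "(1 - u) * ln (\<Prod>j\<in>UNIV. sfun (p$j)) + u * ln (\<Prod>j\<in>UNIV. sfun (q$j)) < ln (\<Prod>j\<in>UNIV. sfun (?z$j))"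
    unfolding lp lq lz using S0 ds by linarith
  have m1: "(1 - u) * ln h \<le> (1 - u) * ln (\<Prod>j\<in>UNIV. sfun (p$j))"
    using l1(1) assms(6) by (intro mult_left_mono) auto
  have m2: "u * ln h \<le> u * ln (\<Prod>j\<in>UNIV. sfun (q$j))"
    using l1(2) assms(5) by (intro mult_left_mono) auto
  have m3: "(1 - u) * ln h + u * ln h = ln h" by (simp add: algebra_simps)
  have "ln h < ln (\<Prod>j\<in>UNIV. sfun (?z$j))"
    using S m1 m2 m3 by linarith
  moreover have zp: "(\<Prod>j\<in>UNIV. sfun (?z$j)) > 0" using zs by (auto intro!: prod_pos)
  ultimately have hz: "h < (\<Prod>j\<in>UNIV. sfun (?z$j))" using assms(1) by simp
  have "h < \<bar>\<Prod>j\<in>UNIV. sfun (?z$j)\<bar>" using hz zp by linarith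
  then show ?thesis using zc unfolding UU_def by blast
qed

lemma center_UU:
  assumes "h < 2 ^ CARD('n)"
  shows "(\<chi> j. pi) \<in> (UU h :: (real^'n) set)"
proof -
  have "sfun pi = 2" by (simp add: sfun_def)
  then show ?thesis using assms pi_gt_zero by (simp add: UU_def)
qed




lemma VVk_eq: "VVk h k = (+) (\<chi> j. 2 * pi * of_int (k $ j)) ` (VV0 h :: (real^'n) set)"
proof -
  have "(\<lambda>x. x + (\<chi> j. 2 * pi * of_int (k $ j))) = (+) (\<chi> j. 2 * pi * of_int (k $ j) :: real^'n)"
    by (rule ext) (simp add: add.commute)
  show ?thesis unfolding VVk_def by (rule image_cong) (auto simp: add.commute)
qed

lemma VVk_compact: "compact (VVk h k :: (real^'n) set)"
  unfolding VVk_eq by (rule compact_translation[OF VV0_compact])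

lemma VVk_U_interior:
  "(+) (\<chi> j. 2 * pi * of_int (k $ j)) ` (UU h :: (real^'n) set) \<subseteq> interior (VVk h k)"
proof (rule interior_maximal)
  show "(+) (\<chi> j. 2 * pi * of_int (k $ j)) ` (UU h :: (real^'n) set) \<subseteq> VVk h k"
    unfolding VVk_eq using UU_sub by blast
  show "open ((+) (\<chi> j. 2 * pi * of_int (k $ j)) ` (UU h :: (real^'n) set))"
    using open_translation[OF UU_open] by simp
qed

lemma VVk_SC:
  assumes "0 < h"
  shows "SC (VVk h k :: (real^'n) set)"
  unfolding SC_def
proof (intro ballI impI subsetI)
  let ?c = "(\<chi> j. 2 * pi * of_int (k $ j)) :: real^'n"
  fix p q z assume p: "p \<in> VVk h k" and q: "q \<in> VVk h k" and pq: "p \<noteq> q" and z: "z \<in> open_segment p q"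
  obtain p' where p': "p' \<in> VV0 h" "p = ?c + p'" using p unfolding VVk_eq by blast
  obtain q' where q': "q' \<in> VV0 h" "q = ?c + q'" using q unfolding VVk_eq by blast
  have "z \<in> (\<lambda>x. ?c + x) ` open_segment p' q'"
    using z p'(2) q'(2) open_segment_translation[of ?c p' q'] by simp
  then obtain z' where z': "z' \<in> open_segment p' q'" "z = ?c + z'" by blast
  then obtain u where u: "p' \<noteq> q'" "0 < u" "u < 1" "z' = (1 - u) *\<^sub>R p' + u *\<^sub>R q'"
    unfolding in_segment by blast
  have "z' \<in> UU h" using VV0_strict[OF assms p'(1) q'(1) u(1-3)] u(4) by simp
  then have "z \<in> (+) ?c ` UU h" using z'(2) by blast
  then show "z \<in> interior (VVk h k)" using VVk_U_interior by blast
qed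

lemma VVk_interior:
  assumes "h < 2 ^ CARD('n)"
  shows "interior (VVk h k :: (real^'n) set) \<noteq> {}"
  using VVk_U_interior[of k h] center_UU[OF assms] by blast

theorem lemma7:
  fixes h :: real and k :: "int ^ 'n::{finite,wellorder}"
  assumes "CARD('n) \<ge> 2"
    and "0 < h" and "h < 2 ^ CARD('n)"
    and "k \<in> Z0"
  shows "supp_tau h k \<subseteq> HH
       \<and> compact (supp_tau h k)
       \<and> strictly_convex_set (supp_tau h k)
       \<and> aff_dim (supp_tau h k) = int CARD('n) - 1
       \<and> (\<forall>x\<in>supp_tau h k. 0 \<le> tau h k x)
       \<and> strictly_concave_on (supp_tau h k) (tau h k)
       \<and> continuous_on HH (tau h k)"
proof -
  let ?K = "VVk h k :: (real^'n::{finite,wellorder}) set"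
  have supp: "supp_tau h k = PP ` ?K"
    unfolding supp_tau_def using supp_eq[of ?K] by simp
  have tau: "tau h k = (\<lambda>x. norm (EE::real^'n::{finite,wellorder}) * measure lborel (Fb ?K x))"
    by (rule ext) (simp add: tau_def Fb_def)
  have cK: "compact ?K" by (rule VVk_compact)
  have sK: "SC ?K" by (rule VVk_SC[OF assms(2)])
  have iK: "interior ?K \<noteq> {}" by (rule VVk_interior[OF assms(3)])
  show ?thesis unfolding supp tau
    using PP_subset_HH[of ?K] supp_compact[OF cK] supp_strictly_convex[OF sK] supp_aff_dim[OF iK]
      supp_concave[OF cK sK] tau_cont[OF cK sK]
    by simp
qed


end
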